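(* Let $G$ be a quiver with $n \geq 1$ vertices, let $\lambda_1 \leq \lambda_2 \leq \cdots \leq \lambda_n$ be the eigenvalues of its Kirchhoff matrix $K$ (listed with multiplicity), and let $d_1 \leq d_2 \leq \cdots \leq d_n$ be its vertex degrees in increasing order, with the convention $d_0 = 0$. Then $\lambda_k \leq d_k + d_{k-1}$ for all $1 \leq k \leq n$.
   Context: A quiver $G=(V,E)$ consists of a finite vertex set $V=\{1,\dots,n\}$ and a finite list (multiset) $E$ of pairs $(v,w)\in V\times V$; repeated edges (multiple connections) and self-loops $(v,v)$ are allowed, and orientation of edges is irrelevant. The adjacency matrix $A$ is the symmetric $n\times n$ matrix with zero diagonal whose entry $A_{ij}$ ($i\neq j$) is the number of entries of $E$ equal to $(i,j)$ or $(j,i)$. The degree $d(i)$ of vertex $i$ is the number of entries $(v,w)$ of $E$ (counted with multiplicity) with $v=i$ or $w=i$; in particular a loop at $i$ contributes $1$ to $d(i)$. $B$ is the diagonal matrix of degrees, and the Kirchhoff matrix is $K=B-A$ (a real symmetric matrix). *)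

theory Defs
  imports "Jordan_Normal_Form.Char_Poly"
begin

text \<open>A quiver on the vertex set {0..<n} (0-based rendering of {1..n}) is given by
  a list E of pairs of vertices; repeated edges and loops are allowed.\<close>

definition quiver :: "nat \<Rightarrow> (nat \<times> nat) list \<Rightarrow> bool" where
  "quiver n E \<longleftrightarrow> (\<forall>(v,w) \<in> set E. v < n \<and> w < n)"

definition qdegree :: "(nat \<times> nat) list \<Rightarrow> nat \<Rightarrow> nat" where
  "qdegree E i = length (filter (\<lambda>(v,w). v = i \<or> w = i) E)"

definition adj_mat :: "nat \<Rightarrow> (nat \<times> nat) list \<Rightarrow> real mat" where
  "adj_mat n E = mat n n (\<lambda>(i,j). if i = j then 0
      else real (length (filter (\<lambda>e. e = (i,j) \<or> e = (j,i)) E)))"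

definition deg_mat :: "nat \<Rightarrow> (nat \<times> nat) list \<Rightarrow> real mat" where
  "deg_mat n E = mat n n (\<lambda>(i,j). if i = j then real (qdegree E i) else 0)"

definition kirchhoff :: "nat \<Rightarrow> (nat \<times> nat) list \<Rightarrow> real mat" where
  "kirchhoff n E = deg_mat n E - adj_mat n E"

text \<open>Vertex degrees in increasing order (0-based list: entry k-1 is d_k).\<close>
definition sorted_degrees :: "nat \<Rightarrow> (nat \<times> nat) list \<Rightarrow> nat list" where
  "sorted_degrees n E = sort (map (qdegree E) [0..<n])"

text \<open>ls lists the eigenvalues of the square matrix M with multiplicity, in
  increasing order: ls is sorted and the characteristic polynomial of M is
  the product of (X - l) over l in ls.\<close>
definition sorted_eigenvalues :: "real mat \<Rightarrow> real list \<Rightarrow> bool" where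
  "sorted_eigenvalues M ls \<longleftrightarrow> sorted ls \<and> length ls = dim_row M \<and>
     char_poly M = (\<Prod>l\<leftarrow>ls. [:- l, 1:])"

end

theory Submission
  imports Defs "Jordan_Normal_Form.Schur_Decomposition"
begin


definition dotp :: "nat \<Rightarrow> (nat \<Rightarrow> real) \<Rightarrow> (nat \<Rightarrow> real) \<Rightarrow> real" where
  "dotp n x y = (\<Sum>i=0..<n. x i * y i)"

definition mulv :: "nat \<Rightarrow> (nat \<Rightarrow> nat \<Rightarrow> real) \<Rightarrow> (nat \<Rightarrow> real) \<Rightarrow> nat \<Rightarrow> real" where
  "mulv n a x = (\<lambda>i. \<Sum>j=0..<n. a i j * x j)"

lemma dotp_comm: "dotp n x y = dotp n y x"
  unfolding dotp_def by (simp add: mult.commute)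

lemma dotp_cong: "(\<And>i. i < n \<Longrightarrow> x i = x' i) \<Longrightarrow> (\<And>i. i < n \<Longrightarrow> y i = y' i) \<Longrightarrow> dotp n x y = dotp n x' y'"
  unfolding dotp_def by (rule sum.cong) auto

lemma dotp_sum_left: "finite L \<Longrightarrow> dotp n (\<lambda>i. \<Sum>l\<in>L. c l * q l i) z = (\<Sum>l\<in>L. c l * dotp n (q l) z)"
  unfolding dotp_def by (simp add: sum_distrib_left sum_distrib_right mult.assoc sum.swap[of _ L])

lemma dotp_sum_right: "finite L \<Longrightarrow> dotp n z (\<lambda>i. \<Sum>l\<in>L. c l * q l i) = (\<Sum>l\<in>L. c l * dotp n z (q l))"
  using dotp_sum_left[of L n c q z] by (simp add: dotp_comm)

lemma dotp_diff_left: "dotp n (\<lambda>i. x i - y i) z = dotp n x z - dotp n y z"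
  unfolding dotp_def by (simp add: left_diff_distrib sum_subtractf)

lemma dotp_diff_right: "dotp n z (\<lambda>i. x i - y i) = dotp n z x - dotp n z y"
  unfolding dotp_def by (simp add: right_diff_distrib sum_subtractf)

lemma dotp_scale_left: "dotp n (\<lambda>i. c * x i) z = c * dotp n x z"
  unfolding dotp_def by (simp add: sum_distrib_left mult.assoc)

lemma dotp_scale_right: "dotp n z (\<lambda>i. c * x i) = c * dotp n z x"
  unfolding dotp_def by (simp add: sum_distrib_left mult.left_commute)

lemma dotp_self_nonneg: "dotp n x x \<ge> 0"
  unfolding dotp_def by (rule sum_nonneg) auto

lemma dotp_self_zero: "dotp n x x = 0 \<Longrightarrow> i < n \<Longrightarrow> x i = 0"
  unfolding dotp_def by (subst (asm) sum_nonneg_eq_0_iff) auto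

lemma mulv_sum: "finite L \<Longrightarrow> mulv n a (\<lambda>i. \<Sum>l\<in>L. c l * q l i) i = (\<Sum>l\<in>L. c l * mulv n a (q l) i)"
  unfolding mulv_def by (simp add: sum_distrib_left mult.left_commute sum.swap[of _ L])

lemma mulv_diff: "mulv n a (\<lambda>i. x i - y i) i = mulv n a x i - mulv n a y i"
  unfolding mulv_def by (simp add: right_diff_distrib sum_subtractf)

lemma mulv_scale: "mulv n a (\<lambda>i. c * x i) i = c * mulv n a x i"
  unfolding mulv_def by (simp add: sum_distrib_left mult.left_commute)

lemma dotp_mulv_sym:
  assumes "\<forall>i<n. \<forall>j<n. a i j = a j i"
  shows "dotp n x (mulv n a y) = dotp n (mulv n a x) y"
proof -
  have "dotp n x (mulv n a y) = (\<Sum>i=0..<n. \<Sum>j=0..<n. x i * a i j * y j)"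
    unfolding dotp_def mulv_def by (simp add: sum_distrib_left mult.assoc)
  also have "\<dots> = (\<Sum>j=0..<n. \<Sum>i=0..<n. x i * a i j * y j)" by (rule sum.swap)
  also have "\<dots> = (\<Sum>j=0..<n. \<Sum>i=0..<n. a j i * x i * y j)"
    using assms by (intro sum.cong refl) (auto simp: mult.commute)
  also have "\<dots> = dotp n (mulv n a x) y"
    unfolding dotp_def mulv_def by (simp add: sum_distrib_right)
  finally show ?thesis .
qed

definition orthn :: "nat \<Rightarrow> nat \<Rightarrow> (nat \<Rightarrow> nat \<Rightarrow> real) \<Rightarrow> bool" where
  "orthn n j q = (\<forall>l<j. \<forall>m<j. dotp n (q l) (q m) = (if l = m then 1 else 0))"

lemma orth_coeff:
  assumes "orthn n j q" "m < j"
  shows "dotp n (\<lambda>i. \<Sum>l=0..<j. c l * q l i) (q m) = c m"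
proof -
  have "dotp n (\<lambda>i. \<Sum>l=0..<j. c l * q l i) (q m) = (\<Sum>l=0..<j. c l * dotp n (q l) (q m))"
    by (rule dotp_sum_left) auto
  also have "\<dots> = (\<Sum>l=0..<j. if l = m then c l else 0)"
    using assms unfolding orthn_def by (intro sum.cong refl) auto
  also have "\<dots> = c m" using assms(2) by simp
  finally show ?thesis .
qed

lemma orth_coeff_cong:
  assumes "orthn n j q" "m < j" "\<And>i. i < n \<Longrightarrow> x i = (\<Sum>l=0..<j. c l * q l i)"
  shows "dotp n x (q m) = c m"
proof -
  have "dotp n x (q m) = dotp n (\<lambda>i. \<Sum>l=0..<j. c l * q l i) (q m)"
    using assms(3) by (intro dotp_cong) auto
  then show ?thesis using orth_coeff[OF assms(1,2)] by simp
qed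




definition sinv where
  "sinv n a es p qi j q \<longleftrightarrow> orthn n j q \<and>
     (\<forall>l<j. \<forall>i<n. mulv n a (q l) i = es l * q l i) \<and>
     (\<forall>t<j. \<forall>i<n. p t i = (\<Sum>l=0..<j. dotp n (p t) (q l) * q l i)) \<and>
     (\<forall>l<j. \<forall>r. l < r \<and> r < n \<longrightarrow> (\<Sum>m=0..<n. qi r m * q l m) = 0)"

lemma sinv_step:
  assumes sym: "\<forall>i<n. \<forall>j<n. a i j = a j i"
    and QP: "\<forall>r<n. \<forall>t<n. (\<Sum>m=0..<n. qi r m * p t m) = (if r = t then 1 else 0)"
    and AP: "\<forall>t<n. \<forall>i<n. mulv n a (p t) i = es t * p t i + (\<Sum>s=0..<t. bm s t * p s i)"
    and j: "j < n" and I: "sinv n a es p qi j q"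
  shows "\<exists>q'. sinv n a es p qi (Suc j) q'"
proof -
  from I have orth: "orthn n j q"
    and eig: "\<forall>l<j. \<forall>i<n. mulv n a (q l) i = es l * q l i"
    and exp: "\<forall>t<j. \<forall>i<n. p t i = (\<Sum>l=0..<j. dotp n (p t) (q l) * q l i)"
    and tri: "\<forall>l<j. \<forall>r. l < r \<and> r < n \<longrightarrow> (\<Sum>m=0..<n. qi r m * q l m) = 0"
    unfolding sinv_def by auto
  define co where "co l = dotp n (p j) (q l)" for l
  define y where "y i = p j i - (\<Sum>l=0..<j. co l * q l i)" for i
  have F1: "dotp n (q m) y = 0" if "m < j" for m
  proof -
    have "dotp n (q m) y = dotp n (q m) (p j) - dotp n (q m) (\<lambda>i. \<Sum>l=0..<j. co l * q l i)"
      unfolding y_def[abs_def] by (rule dotp_diff_right)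
    also have "dotp n (q m) (\<lambda>i. \<Sum>l=0..<j. co l * q l i) = co m"
      using orth_coeff[OF orth that, of co] by (simp add: dotp_comm)
    finally show ?thesis by (simp add: co_def dotp_comm)
  qed
  have Qy: "(\<Sum>m=0..<n. qi r m * y m) = (if r = j then 1 else 0)" if "j \<le> r" "r < n" for r
  proof -
    have "(\<Sum>m=0..<n. qi r m * y m) = (\<Sum>m=0..<n. qi r m * p j m) - (\<Sum>m=0..<n. \<Sum>l=0..<j. co l * (qi r m * q l m))"
      unfolding y_def by (simp add: right_diff_distrib sum_subtractf sum_distrib_left mult.left_commute)
    also have "(\<Sum>m=0..<n. \<Sum>l=0..<j. co l * (qi r m * q l m)) = (\<Sum>l=0..<j. co l * (\<Sum>m=0..<n. qi r m * q l m))"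
      by (simp add: sum.swap[of _ "{0..<j}"] sum_distrib_left)
    also have "\<dots> = 0" using tri that by (intro sum.neutral) auto
    finally show ?thesis using QP that j by simp
  qed
  have ypos: "dotp n y y > 0"
  proof -
    have "dotp n y y \<noteq> 0"
    proof
      assume "dotp n y y = 0"
      then have "\<forall>m<n. y m = 0" using dotp_self_zero by blast
      then have "(\<Sum>m=0..<n. qi j m * y m) = 0" by simp
      then show False using Qy[of j] j by simp
    qed
    then show ?thesis using dotp_self_nonneg[of n y] by linarith
  qed
  define gam where "gam l = es j * co l + (\<Sum>s=0..<j. bm s j * dotp n (p s) (q l)) - co l * es l" for l
  have W: "mulv n a y i - es j * y i = (\<Sum>l=0..<j. gam l * q l i)" if "i < n" for i
  proof -
    have "mulv n a y i = mulv n a (p j) i - (\<Sum>l=0..<j. co l * mulv n a (q l) i)"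
      unfolding y_def[abs_def] by (simp add: mulv_diff mulv_sum)
    also have "(\<Sum>l=0..<j. co l * mulv n a (q l) i) = (\<Sum>l=0..<j. co l * es l * q l i)"
      using eig that by (intro sum.cong refl) auto
    also have "mulv n a (p j) i = es j * p j i + (\<Sum>s=0..<j. bm s j * p s i)"
      using AP j that by auto
    also have "(\<Sum>s=0..<j. bm s j * p s i) = (\<Sum>s=0..<j. bm s j * (\<Sum>l=0..<j. dotp n (p s) (q l) * q l i))"
      using exp that by (intro sum.cong refl) auto
    also have "\<dots> = (\<Sum>s=0..<j. \<Sum>l=0..<j. bm s j * dotp n (p s) (q l) * q l i)"
      by (simp add: sum_distrib_left mult_ac)
    also have "\<dots> = (\<Sum>l=0..<j. \<Sum>s=0..<j. bm s j * dotp n (p s) (q l) * q l i)"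
      by (rule sum.swap)
    also have "\<dots> = (\<Sum>l=0..<j. (\<Sum>s=0..<j. bm s j * dotp n (p s) (q l)) * q l i)"
      by (simp add: sum_distrib_right)
    finally have "mulv n a y i = es j * p j i + (\<Sum>l=0..<j. (\<Sum>s=0..<j. bm s j * dotp n (p s) (q l)) * q l i)
        - (\<Sum>l=0..<j. co l * es l * q l i)" .
    moreover have "es j * y i = es j * p j i - (\<Sum>l=0..<j. es j * co l * q l i)"
      unfolding y_def by (simp add: right_diff_distrib sum_distrib_left mult.assoc)
    moreover have "(\<Sum>l=0..<j. gam l * q l i) = (\<Sum>l=0..<j. es j * co l * q l i)
        + (\<Sum>l=0..<j. (\<Sum>s=0..<j. bm s j * dotp n (p s) (q l)) * q l i) - (\<Sum>l=0..<j. co l * es l * q l i)"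
      unfolding gam_def by (simp only: left_diff_distrib distrib_right sum.distrib sum_subtractf)
    ultimately show ?thesis by linarith
  qed
  have gam0: "gam m = 0" if "m < j" for m
  proof -
    have "dotp n (\<lambda>i. mulv n a y i - es j * y i) (q m) = gam m"
      using W by (intro orth_coeff_cong[OF orth that]) auto
    moreover have "dotp n (\<lambda>i. mulv n a y i - es j * y i) (q m) = 0"
    proof -
      have "dotp n (\<lambda>i. mulv n a y i - es j * y i) (q m) = dotp n (mulv n a y) (q m) - es j * dotp n y (q m)"
        by (simp add: dotp_diff_left dotp_scale_left)
      also have "dotp n (mulv n a y) (q m) = dotp n y (mulv n a (q m))"
        by (simp add: dotp_mulv_sym[OF sym])
      also have "\<dots> = dotp n y (\<lambda>i. es m * q m i)"
        using eig that by (intro dotp_cong) auto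
      also have "\<dots> = 0" using F1[OF that] by (simp add: dotp_scale_right dotp_comm)
      finally show ?thesis using F1[OF that] by (simp add: dotp_comm)
    qed
    ultimately show ?thesis by simp
  qed
  have Ay: "mulv n a y i = es j * y i" if "i < n" for i
    using W[OF that] gam0 by simp
  define s where "s = sqrt (dotp n y y)"
  have spos: "s > 0" using ypos unfolding s_def by simp
  have ss: "s * s = dotp n y y" using ypos unfolding s_def by simp
  define qj where "qj i = y i / s" for i
  define q' where "q' = q(j := qj)"
  have q'l: "q' l = q l" if "l < j" for l using that unfolding q'_def by simp
  have q'j: "q' j = qj" unfolding q'_def by simp
  have qjq: "dotp n (q m) qj = 0" if "m < j" for m
    using F1[OF that] unfolding qj_def[abs_def] by (simp add: divide_inverse mult.commute[of _ "inverse s"] dotp_scale_right)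
  have qjqj: "dotp n qj qj = 1"
    unfolding qj_def[abs_def] using spos ss
    by (simp add: divide_inverse mult.commute[of _ "inverse s"] dotp_scale_right dotp_scale_left ss[symmetric]) (simp add: field_simps)
  have sum_q': "(\<Sum>l=0..<j. f l (q' l)) = (\<Sum>l=0..<j. f l (q l))" for f :: "nat \<Rightarrow> (nat \<Rightarrow> real) \<Rightarrow> real"
    by (intro sum.cong refl) (simp add: q'l)
  have "orthn n (Suc j) q'"
    unfolding orthn_def
  proof (intro allI impI)
    fix l m assume "l < Suc j" "m < Suc j"
    then consider "l < j" "m < j" | "l = j" "m < j" | "l < j" "m = j" | "l = j" "m = j" by linarith
    then show "dotp n (q' l) (q' m) = (if l = m then 1 else 0)"
    proof cases
      case 1 then show ?thesis using orth q'l unfolding orthn_def by simp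
    next
      case 2 then show ?thesis using qjq[of m] q'l q'j by (simp add: dotp_comm)
    next
      case 3 then show ?thesis using qjq[of l] q'l q'j by simp
    next
      case 4 then show ?thesis using qjqj q'j by simp
    qed
  qed
  moreover have "\<forall>l<Suc j. \<forall>i<n. mulv n a (q' l) i = es l * q' l i"
  proof (intro allI impI)
    fix l i assume "l < Suc j" "i < n"
    show "mulv n a (q' l) i = es l * q' l i"
    proof (cases "l = j")
      case True
      have "mulv n a (\<lambda>i. inverse s * y i) i = inverse s * mulv n a y i" by (rule mulv_scale)
      then show ?thesis using True q'j Ay[OF \<open>i < n\<close>] unfolding qj_def[abs_def]
        by (simp add: divide_inverse mult.commute[of _ "inverse s"])
    next
      case False then show ?thesis using eig q'l \<open>l < Suc j\<close> \<open>i < n\<close> by simp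
    qed
  qed
  moreover have "\<forall>t<Suc j. \<forall>i<n. p t i = (\<Sum>l=0..<Suc j. dotp n (p t) (q' l) * q' l i)"
  proof (intro allI impI)
    fix t i assume t: "t < Suc j" and i: "i < n"
    show "p t i = (\<Sum>l=0..<Suc j. dotp n (p t) (q' l) * q' l i)"
    proof (cases "t = j")
      case True
      have pj: "p j i = y i + (\<Sum>l=0..<j. co l * q l i)" for i unfolding y_def by simp
      have "dotp n (p j) y = dotp n y y + (\<Sum>l=0..<j. co l * dotp n (q l) y)"
      proof -
        have "dotp n (p j) y = dotp n (\<lambda>i. y i + (\<Sum>l=0..<j. co l * q l i)) y"
          using pj by (intro dotp_cong) auto
        also have "\<dots> = dotp n y y + dotp n (\<lambda>i. \<Sum>l=0..<j. co l * q l i) y"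
          unfolding dotp_def by (simp add: distrib_right sum.distrib)
        finally show ?thesis by (simp add: dotp_sum_left)
      qed
      then have "dotp n (p j) y = s * s" using F1 ss by simp
      then have dj: "dotp n (p j) qj = s"
        unfolding qj_def[abs_def] using spos
        by (simp add: divide_inverse mult.commute[of _ "inverse s"] dotp_scale_right)
      have "(\<Sum>l=0..<Suc j. dotp n (p t) (q' l) * q' l i) = s * qj i + (\<Sum>l=0..<j. co l * q l i)"
        using True dj q'j sum_q'[of "\<lambda>l v. dotp n (p j) v * v i"] by (simp add: co_def)
      also have "s * qj i = y i" unfolding qj_def using spos by simp
      finally show ?thesis using True pj[of i] by simp
    next
      case False
      then have tj: "t < j" using t by simp
      have "dotp n (p t) qj = dotp n (\<lambda>i. \<Sum>l=0..<j. dotp n (p t) (q l) * q l i) qj"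
        using exp tj by (intro dotp_cong) auto
      also have "\<dots> = (\<Sum>l=0..<j. dotp n (p t) (q l) * dotp n (q l) qj)" by (simp add: dotp_sum_left)
      also have "\<dots> = 0" using qjq by simp
      finally have "dotp n (p t) qj = 0" .
      then have "(\<Sum>l=0..<Suc j. dotp n (p t) (q' l) * q' l i) = (\<Sum>l=0..<j. dotp n (p t) (q l) * q l i)"
        using q'j sum_q'[of "\<lambda>l v. dotp n (p t) v * v i"] by simp
      then show ?thesis using exp tj i by simp
    qed
  qed
  moreover have "\<forall>l<Suc j. \<forall>r. l < r \<and> r < n \<longrightarrow> (\<Sum>m=0..<n. qi r m * q' l m) = 0"
  proof (intro allI impI)
    fix l r assume l: "l < Suc j" and r: "l < r \<and> r < n"
    show "(\<Sum>m=0..<n. qi r m * q' l m) = 0"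
    proof (cases "l = j")
      case True
      have "(\<Sum>m=0..<n. qi r m * q' l m) = inverse s * (\<Sum>m=0..<n. qi r m * y m)"
        using True q'j unfolding qj_def by (simp add: sum_distrib_left divide_inverse mult_ac)
      then show ?thesis using Qy[of r] r True by simp
    next
      case False then show ?thesis using tri q'l l r by simp
    qed
  qed
  ultimately show ?thesis unfolding sinv_def by blast
qed




lemma sinv_all:
  assumes sym: "\<forall>i<n. \<forall>j<n. a i j = a j i"
    and QP: "\<forall>r<n. \<forall>t<n. (\<Sum>m=0..<n. qi r m * p t m) = (if r = t then 1 else 0)"
    and AP: "\<forall>t<n. \<forall>i<n. mulv n a (p t) i = es t * p t i + (\<Sum>s=0..<t. bm s t * p s i)"
  shows "j \<le> n \<Longrightarrow> \<exists>q. sinv n a es p qi j q"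
proof (induction j)
  case 0
  show ?case by (rule exI[of _ "\<lambda>_ _. 0"]) (simp add: sinv_def orthn_def)
next
  case (Suc j)
  then obtain q where "sinv n a es p qi j q" by auto
  then show ?case using sinv_step[OF sym QP AP] Suc.prems by auto
qed

lemma spectral_fun:
  assumes sym: "\<forall>i<n. \<forall>j<n. a i j = a j i"
    and QP: "\<forall>r<n. \<forall>t<n. (\<Sum>m=0..<n. qi r m * p t m) = (if r = t then 1 else 0)"
    and PQ: "\<forall>i<n. \<forall>m<n. (\<Sum>t=0..<n. p t i * qi t m) = (if i = m then 1 else 0)"
    and AP: "\<forall>t<n. \<forall>i<n. mulv n a (p t) i = es t * p t i + (\<Sum>s=0..<t. bm s t * p s i)"
  shows "\<exists>q. orthn n n q \<and> (\<forall>l<n. \<forall>i<n. mulv n a (q l) i = es l * q l i) \<and>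
     (\<forall>x. \<forall>i<n. x i = (\<Sum>l=0..<n. dotp n x (q l) * q l i))"
proof -
  obtain q where I: "sinv n a es p qi n q" using sinv_all[OF sym QP AP, of n] by auto
  then have orth: "orthn n n q" and eig: "\<forall>l<n. \<forall>i<n. mulv n a (q l) i = es l * q l i"
    and exp: "\<forall>t<n. \<forall>i<n. p t i = (\<Sum>l=0..<n. dotp n (p t) (q l) * q l i)"
    unfolding sinv_def by auto
  have "x i = (\<Sum>l=0..<n. dotp n x (q l) * q l i)" if i: "i < n" for x i
  proof -
    define z where "z t = (\<Sum>m=0..<n. qi t m * x m)" for t
    define g where "g l = (\<Sum>t=0..<n. z t * dotp n (p t) (q l))" for l
    have X: "x i = (\<Sum>l=0..<n. g l * q l i)" if i: "i < n" for i
    proof -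
      have "x i = (\<Sum>m=0..<n. (if i = m then x m else 0))" using i by simp
      also have "\<dots> = (\<Sum>m=0..<n. (if i = m then 1 else 0) * x m)" by (intro sum.cong refl) auto
      also have "\<dots> = (\<Sum>m=0..<n. (\<Sum>t=0..<n. p t i * qi t m) * x m)"
        using PQ i by (intro sum.cong refl) auto
      also have "\<dots> = (\<Sum>m=0..<n. \<Sum>t=0..<n. p t i * (qi t m * x m))"
        by (simp add: sum_distrib_right mult.assoc)
      also have "\<dots> = (\<Sum>t=0..<n. \<Sum>m=0..<n. p t i * (qi t m * x m))" by (rule sum.swap)
      also have "\<dots> = (\<Sum>t=0..<n. z t * p t i)"
        unfolding z_def by (simp add: sum_distrib_left mult.commute)
      also have "\<dots> = (\<Sum>t=0..<n. z t * (\<Sum>l=0..<n. dotp n (p t) (q l) * q l i))"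
        using exp i by (intro sum.cong refl) auto
      also have "\<dots> = (\<Sum>t=0..<n. \<Sum>l=0..<n. z t * dotp n (p t) (q l) * q l i)"
        by (simp add: sum_distrib_left mult.assoc)
      also have "\<dots> = (\<Sum>l=0..<n. \<Sum>t=0..<n. z t * dotp n (p t) (q l) * q l i)" by (rule sum.swap)
      also have "\<dots> = (\<Sum>l=0..<n. g l * q l i)"
        unfolding g_def by (simp add: sum_distrib_right)
      finally show ?thesis .
    qed
    have "dotp n x (q l) = g l" if "l < n" for l
      using X by (intro orth_coeff_cong[OF orth that]) auto
    then show ?thesis using X[OF i] by simp
  qed
  then show ?thesis using orth eig by blast
qed

lemma spectral_mat:
  fixes K :: "real mat"
  assumes K: "K \<in> carrier_mat n n" and sym: "\<forall>i<n. \<forall>j<n. K $$ (i,j) = K $$ (j,i)"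
    and cp: "char_poly K = (\<Prod>l\<leftarrow>ls. [:- l, 1:])"
  shows "\<exists>q. orthn n n q \<and> (\<forall>l<n. \<forall>i<n. mulv n (\<lambda>i j. K $$ (i,j)) (q l) i = ls ! l * q l i) \<and>
     (\<forall>x. \<forall>i<n. x i = (\<Sum>l=0..<n. dotp n x (q l) * q l i))"
proof -
  obtain B P Q where sd: "schur_decomposition K ls = (B,P,Q)" by (cases "schur_decomposition K ls") auto
  from schur_decomposition[OF K cp sd] have sim: "similar_mat_wit K B P Q"
    and ut: "upper_triangular B" and dg: "diag_mat B = ls" by auto
  from sim K have B: "B \<in> carrier_mat n n" and P: "P \<in> carrier_mat n n" and Q: "Q \<in> carrier_mat n n"
    and PQ: "P * Q = 1\<^sub>m n" and QP: "Q * P = 1\<^sub>m n" and KPBQ: "K = P * B * Q"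
    unfolding similar_mat_wit_def Let_def by auto
  have KP: "K * P = P * B"
  proof -
    have "K * P = P * B * Q * P" using KPBQ by simp
    also have "\<dots> = P * B * (Q * P)" using P B Q by (simp add: assoc_mult_mat[of _ n n _ n _ n])
    also have "\<dots> = P * B" using QP P B by simp
    finally show ?thesis .
  qed
  define a where "a i j = K $$ (i,j)" for i j
  define p where "p t i = P $$ (i,t)" for t i
  define qi where "qi r m = Q $$ (r,m)" for r m
  define bm where "bm s t = B $$ (s,t)" for s t
  have ls: "ls ! t = B $$ (t,t)" if "t < n" for t
    using dg B that unfolding diag_mat_def by auto
  have symA: "\<forall>i<n. \<forall>j<n. a i j = a j i" using sym unfolding a_def by auto
  have QP': "\<forall>r<n. \<forall>t<n. (\<Sum>m=0..<n. qi r m * p t m) = (if r = t then 1 else 0)"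
  proof (intro allI impI)
    fix r t assume "r < n" "t < n"
    then have "(Q * P) $$ (r,t) = (\<Sum>m=0..<n. qi r m * p t m)"
      using P Q unfolding qi_def p_def by (simp add: scalar_prod_def)
    then show "(\<Sum>m=0..<n. qi r m * p t m) = (if r = t then 1 else 0)"
      using QP \<open>r < n\<close> \<open>t < n\<close> by simp
  qed
  have PQ': "\<forall>i<n. \<forall>m<n. (\<Sum>t=0..<n. p t i * qi t m) = (if i = m then 1 else 0)"
  proof (intro allI impI)
    fix i m assume "i < n" "m < n"
    then have "(P * Q) $$ (i,m) = (\<Sum>t=0..<n. p t i * qi t m)"
      using P Q unfolding qi_def p_def by (simp add: scalar_prod_def)
    then show "(\<Sum>t=0..<n. p t i * qi t m) = (if i = m then 1 else 0)"
      using PQ \<open>i < n\<close> \<open>m < n\<close> by simp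
  qed
  have AP: "\<forall>t<n. \<forall>i<n. mulv n a (p t) i = ls ! t * p t i + (\<Sum>s=0..<t. bm s t * p s i)"
  proof (intro allI impI)
    fix t i assume t: "t < n" and i: "i < n"
    have "mulv n a (p t) i = (K * P) $$ (i,t)"
      using K P t i unfolding mulv_def a_def p_def by (simp add: scalar_prod_def)
    also have "\<dots> = (P * B) $$ (i,t)" using KP by simp
    also have "\<dots> = (\<Sum>s=0..<n. bm s t * p s i)"
      using P B t i unfolding bm_def p_def by (simp add: scalar_prod_def mult.commute)
    also have "\<dots> = (\<Sum>s=0..<Suc t. bm s t * p s i) + (\<Sum>s=Suc t..<n. bm s t * p s i)"
      by (rule sum.atLeastLessThan_concat[symmetric]) (use t in auto)
    also have "(\<Sum>s=Suc t..<n. bm s t * p s i) = 0"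
      using ut B unfolding upper_triangular_def bm_def by (intro sum.neutral) auto
    also have "(\<Sum>s=0..<Suc t. bm s t * p s i) = ls ! t * p t i + (\<Sum>s=0..<t. bm s t * p s i)"
      using ls[OF t] unfolding bm_def by simp
    finally show "mulv n a (p t) i = ls ! t * p t i + (\<Sum>s=0..<t. bm s t * p s i)" by simp
  qed
  from spectral_fun[OF symA QP' PQ' AP] show ?thesis unfolding a_def by simp
qed




definition ge :: "(nat \<Rightarrow> real) \<Rightarrow> nat \<times> nat \<Rightarrow> real" where
  "ge x e = (if fst e = snd e then (x (fst e))^2 else (x (fst e) - x (snd e))^2)"

definition cnt :: "(nat \<times> nat) list \<Rightarrow> nat \<Rightarrow> nat \<Rightarrow> nat" where
  "cnt E i j = length (filter (\<lambda>e. e = (i,j) \<or> e = (j,i)) E)"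

lemma kirch_entry:
  assumes "i < n" "j < n"
  shows "kirchhoff n E $$ (i,j) = (if i = j then real (qdegree E i) else - real (cnt E i j))"
  using assms unfolding kirchhoff_def deg_mat_def adj_mat_def cnt_def by simp

lemma kirch_carrier: "kirchhoff n E \<in> carrier_mat n n"
  unfolding kirchhoff_def deg_mat_def adj_mat_def by auto

lemma qdegree_Cons: "qdegree (e # E) i = (if fst e = i \<or> snd e = i then 1 else 0) + qdegree E i"
  unfolding qdegree_def by (cases e) auto

lemma cnt_Cons: "cnt (e # E) i j = (if e = (i,j) \<or> e = (j,i) then 1 else 0) + cnt E i j"
  unfolding cnt_def by auto

lemma S1:
  assumes "\<forall>(v,w) \<in> set E. v < n \<and> w < n"
  shows "(\<Sum>i=0..<n. real (qdegree E i) * (x i)^2) =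
    (\<Sum>e\<leftarrow>E. if fst e = snd e then (x (fst e))^2 else (x (fst e))^2 + (x (snd e))^2)"
  using assms
proof (induction E)
  case Nil
  then show ?case by (simp add: qdegree_def)
next
  case (Cons e E)
  obtain v w where e: "e = (v,w)" by (cases e)
  have vw: "v < n" "w < n" using Cons.prems e by auto
  have "(\<Sum>i=0..<n. real (qdegree (e # E) i) * (x i)^2) =
     (\<Sum>i=0..<n. (if v = i \<or> w = i then (x i)^2 else 0)) + (\<Sum>i=0..<n. real (qdegree E i) * (x i)^2)"
    unfolding sum.distrib[symmetric] by (intro sum.cong refl) (simp add: qdegree_Cons e distrib_right)
  also have "(\<Sum>i=0..<n. (if v = i \<or> w = i then (x i)^2 else 0)) =
      (if v = w then (x v)^2 else (x v)^2 + (x w)^2)"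
  proof (cases "v = w")
    case True then show ?thesis using vw by simp
  next
    case False
    have "(\<Sum>i=0..<n. (if v = i \<or> w = i then (x i)^2 else 0)) =
       (\<Sum>i=0..<n. (if v = i then (x i)^2 else 0) + (if w = i then (x i)^2 else 0))"
      using False by (intro sum.cong refl) auto
    then show ?thesis using False vw by (simp add: sum.distrib)
  qed
  finally show ?case using Cons e by simp
qed

lemma delta2:
  fixes v w n :: nat
  assumes "v < n" "w < n"
  shows "(\<Sum>i=0..<n. \<Sum>j=0..<n. if i = v \<and> j = w then f i j else 0) = (f v w :: real)"
proof -
  have D: "(\<Sum>j=0..<n. if j = w then g j else 0) = g w" for g :: "nat \<Rightarrow> real"
    using assms by simp
  have D2: "(\<Sum>j=0..<n. if j = v then g j else 0) = g v" for g :: "nat \<Rightarrow> real"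
    using assms by simp
  have "(\<Sum>j=0..<n. if i = v \<and> j = w then f i j else 0) = (if i = v then f v w else 0)" for i
  proof (cases "i = v")
    case True then show ?thesis using D[of "f v"] assms by simp
  qed simp
  then show ?thesis using D2[of "\<lambda>i. f i w"] by simp
qed

lemma S2:
  assumes "\<forall>(v,w) \<in> set E. v < n \<and> w < n"
  shows "(\<Sum>i=0..<n. \<Sum>j=0..<n. (if i = j then 0 else real (cnt E i j)) * x i * x j) =
    (\<Sum>e\<leftarrow>E. if fst e = snd e then 0 else 2 * x (fst e) * x (snd e))"
  using assms
proof (induction E)
  case Nil
  then show ?case by (simp add: cnt_def)
next
  case (Cons e E)
  obtain v w where e: "e = (v,w)" by (cases e)
  have vw: "v < n" "w < n" using Cons.prems e by auto
  have "(\<Sum>i=0..<n. \<Sum>j=0..<n. (if i = j then 0 else real (cnt (e#E) i j)) * x i * x j) =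
     (\<Sum>i=0..<n. \<Sum>j=0..<n. (if i \<noteq> j \<and> ((v,w) = (i,j) \<or> (v,w) = (j,i)) then x i * x j else 0)) +
     (\<Sum>i=0..<n. \<Sum>j=0..<n. (if i = j then 0 else real (cnt E i j)) * x i * x j)"
    unfolding sum.distrib[symmetric] by (intro sum.cong refl) (simp add: cnt_Cons e distrib_right)
  also have "(\<Sum>i=0..<n. \<Sum>j=0..<n. (if i \<noteq> j \<and> ((v,w) = (i,j) \<or> (v,w) = (j,i)) then x i * x j else 0)) =
      (if v = w then 0 else 2 * x v * x w)"
  proof (cases "v = w")
    case True
    have "(\<Sum>i=0..<n. \<Sum>j=0..<n. (if i \<noteq> j \<and> ((v,w) = (i,j) \<or> (v,w) = (j,i)) then x i * x j else 0)) = 0"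
      by (intro sum.neutral ballI) (use True in auto)
    then show ?thesis using True by simp
  next
    case False
    have "(\<Sum>i=0..<n. \<Sum>j=0..<n. (if i \<noteq> j \<and> ((v,w) = (i,j) \<or> (v,w) = (j,i)) then x i * x j else 0)) =
       (\<Sum>i=0..<n. \<Sum>j=0..<n. (if i = v \<and> j = w then x i * x j else 0) + (if i = w \<and> j = v then x i * x j else 0))"
      using False by (intro sum.cong refl) auto
    also have "\<dots> = x v * x w + x w * x v"
      using delta2[OF vw, of "\<lambda>i j. x i * x j"] delta2[OF vw(2,1), of "\<lambda>i j. x i * x j"]
      by (simp only: sum.distrib)
    finally show ?thesis using False by simp
  qed
  finally show ?case using Cons e by simp
qed

lemma quad_form:
  assumes q: "quiver n E"
  shows "dotp n x (mulv n (\<lambda>i j. kirchhoff n E $$ (i,j)) x) = (\<Sum>e\<leftarrow>E. ge x e)"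
proof -
  have E: "\<forall>(v,w) \<in> set E. v < n \<and> w < n" using q unfolding quiver_def by auto
  have "dotp n x (mulv n (\<lambda>i j. kirchhoff n E $$ (i,j)) x) =
     (\<Sum>i=0..<n. \<Sum>j=0..<n. x i * kirchhoff n E $$ (i,j) * x j)"
    unfolding dotp_def mulv_def by (simp add: sum_distrib_left mult.assoc)
  also have "\<dots> = (\<Sum>i=0..<n. \<Sum>j=0..<n. (if i = j then real (qdegree E i) * x i * x j else 0)
       - (if i = j then 0 else real (cnt E i j)) * x i * x j)"
    by (intro sum.cong refl) (auto simp: kirch_entry)
  also have "\<dots> = (\<Sum>i=0..<n. real (qdegree E i) * (x i)^2)
      - (\<Sum>i=0..<n. \<Sum>j=0..<n. (if i = j then 0 else real (cnt E i j)) * x i * x j)"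
    by (simp add: sum_subtractf power2_eq_square mult.assoc)
  also have "\<dots> = (\<Sum>e\<leftarrow>E. ge x e)"
    unfolding S1[OF E] S2[OF E] ge_def
    by (simp add: sum_list_subtractf[symmetric] power2_diff cong: if_cong)
      (rule arg_cong[where f=sum_list], rule map_cong, auto)
  finally show ?thesis .
qed




lemma cs_ineq:
  fixes a b p q :: real
  assumes "p > 0" "q > 0"
  shows "(a - b)^2 \<le> (p + q) * (a^2 / p + b^2 / q)"
proof -
  have "(p + q) * (a^2 / p + b^2 / q) - (a - b)^2 = (a * q + b * p)^2 / (p * q)"
    using assms by (simp add: field_simps power2_eq_square)
  moreover have "(a * q + b * p)^2 / (p * q) \<ge> 0" using assms by simp
  ultimately show ?thesis by linarith
qed

lemma sum_list_qdeg: "(\<Sum>e\<leftarrow>E. if fst e = i \<or> snd e = i then c else 0) = real (qdegree E i) * (c::real)"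
  by (induction E) (auto simp: qdegree_def distrib_right)

lemma sum_list_sum_swap: "(\<Sum>e\<leftarrow>E. \<Sum>i\<in>A. f e i) = (\<Sum>i\<in>A. \<Sum>e\<leftarrow>E. (f e i :: real))"
  by (induction E) (auto simp: sum.distrib)

lemma qdeg_pos: "e \<in> set E \<Longrightarrow> fst e = i \<or> snd e = i \<Longrightarrow> qdegree E i \<ge> 1"
  unfolding qdegree_def by (metis (mono_tags, lifting) One_nat_def Suc_le_eq case_prod_beta
      filter_empty_conv length_greater_0_conv)

lemma graph_bound:
  assumes q: "quiver n E"
    and xT: "\<forall>i. i \<notin> T \<longrightarrow> x i = 0"
    and c: "c \<ge> 0"
    and d1: "\<forall>v\<in>T. real (qdegree E v) \<le> c"
    and d2: "\<forall>v\<in>T. \<forall>w\<in>T. v \<noteq> w \<longrightarrow> real (qdegree E v) + real (qdegree E w) \<le> c"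
  shows "(\<Sum>e\<leftarrow>E. ge x e) \<le> c * (\<Sum>i=0..<n. (x i)^2)"
proof -
  define d where "d i = real (qdegree E i)" for i
  define y where "y i = (if qdegree E i = 0 then 0 else (x i)^2 / d i)" for i
  have ynn: "y i \<ge> 0" for i unfolding y_def d_def by auto
  have dy: "d i * y i = (x i)^2" if "qdegree E i \<ge> 1" for i
    using that unfolding y_def d_def by auto
  have dy2: "d i * y i \<le> (x i)^2" for i
    unfolding y_def d_def by auto
  have edge: "ge x e \<le> c * (\<Sum>i=0..<n. if fst e = i \<or> snd e = i then y i else 0)"
    if e: "e \<in> set E" for e
  proof -
    obtain v w where vw: "e = (v,w)" by (cases e)
    have vn: "v < n" "w < n" using q e vw unfolding quiver_def by auto
    have dv: "qdegree E v \<ge> 1" "qdegree E w \<ge> 1" using qdeg_pos[OF e] vw by auto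
    show ?thesis
    proof (cases "v = w")
      case True
      have S: "(\<Sum>i=0..<n. if fst e = i \<or> snd e = i then y i else 0) = y v"
        using vw True vn by simp
      have "ge x e = (x v)^2" using vw True unfolding ge_def by simp
      also have "\<dots> \<le> c * y v"
      proof (cases "v \<in> T")
        case True
        then have "d v \<le> c" using d1 unfolding d_def by auto
        then have "d v * y v \<le> c * y v" using ynn by (simp add: mult_right_mono)
        then show ?thesis using dy[OF dv(1)] by simp
      next
        case False then show ?thesis using xT c ynn by simp
      qed
      finally show ?thesis using S by simp
    next
      case False
      have S: "(\<Sum>i=0..<n. if fst e = i \<or> snd e = i then y i else 0) = y v + y w"
      proof -
        have "(\<Sum>i=0..<n. if fst e = i \<or> snd e = i then y i else 0) =
          (\<Sum>i=0..<n. (if v = i then y i else 0) + (if w = i then y i else 0))"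
          using vw False by (intro sum.cong refl) auto
        then show ?thesis using vn by (simp add: sum.distrib)
      qed
      have g: "ge x e = (x v - x w)^2" using vw False unfolding ge_def by simp
      have "(x v - x w)^2 \<le> c * (y v + y w)"
      proof (cases "v \<in> T"; cases "w \<in> T")
        assume vT: "v \<in> T" and wT: "w \<in> T"
        have pv: "d v > 0" "d w > 0" using dv unfolding d_def by auto
        have "(x v - x w)^2 \<le> (d v + d w) * ((x v)^2 / d v + (x w)^2 / d w)" by (rule cs_ineq[OF pv])
        also have "(x v)^2 / d v + (x w)^2 / d w = y v + y w"
          using dv unfolding y_def d_def by auto
        also have "(d v + d w) * (y v + y w) \<le> c * (y v + y w)"
          using d2 vT wT False ynn[of v] ynn[of w] unfolding d_def by (intro mult_right_mono) auto
        finally show ?thesis .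
      next
        assume vT: "v \<in> T" and wT: "w \<notin> T"
        have "(x v - x w)^2 = d v * y v" using xT wT dy[OF dv(1)] by simp
        also have "\<dots> \<le> c * y v" using d1 vT ynn[of v] unfolding d_def by (intro mult_right_mono) auto
        also have "\<dots> \<le> c * (y v + y w)" using c ynn[of w] by (simp add: distrib_left)
        finally show ?thesis .
      next
        assume vT: "v \<notin> T" and wT: "w \<in> T"
        have "(x v - x w)^2 = d w * y w" using xT vT dy[OF dv(2)] by simp
        also have "\<dots> \<le> c * y w" using d1 wT ynn[of w] unfolding d_def by (intro mult_right_mono) auto
        also have "\<dots> \<le> c * (y v + y w)" using c ynn[of v] by (simp add: distrib_left)
        finally show ?thesis .
      next
        assume vT: "v \<notin> T" and wT: "w \<notin> T"
        then show ?thesis using xT c ynn[of v] ynn[of w] by simp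
      qed
      then show ?thesis using S g by simp
    qed
  qed
  have "(\<Sum>e\<leftarrow>E. ge x e) \<le> (\<Sum>e\<leftarrow>E. c * (\<Sum>i=0..<n. if fst e = i \<or> snd e = i then y i else 0))"
    using edge by (rule sum_list_mono)
  also have "\<dots> = c * (\<Sum>i=0..<n. \<Sum>e\<leftarrow>E. if fst e = i \<or> snd e = i then y i else 0)"
    by (simp add: sum_list_const_mult sum_list_sum_swap)
  also have "\<dots> = c * (\<Sum>i=0..<n. d i * y i)"
    unfolding sum_list_qdeg d_def by simp
  also have "\<dots> \<le> c * (\<Sum>i=0..<n. (x i)^2)"
    using c dy2 by (intro mult_left_mono sum_mono) auto
  finally show ?thesis .
qed




lemma dotp_delta: "t < n \<Longrightarrow> dotp n (\<lambda>i. if i = t then c else 0) z = c * z t"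
  unfolding dotp_def by (simp add: if_distrib[of "\<lambda>u. u * _"] cong: if_cong)

lemma elim_lemma:
  fixes w :: "nat \<Rightarrow> nat \<Rightarrow> real"
  shows "finite T \<Longrightarrow> T \<subseteq> {0..<n} \<Longrightarrow> r < card T \<Longrightarrow>
    \<exists>x. (\<forall>i. i \<notin> T \<longrightarrow> x i = 0) \<and> (\<exists>i\<in>T. x i \<noteq> 0) \<and> (\<forall>l<r. dotp n x (w l) = 0)"
proof (induction r arbitrary: T w)
  case 0
  then obtain t where t: "t \<in> T" by (metis card.empty ex_in_conv less_nat_zero_code)
  show ?case by (rule exI[of _ "\<lambda>i. if i = t then 1 else 0"]) (use t in auto)
next
  case (Suc r)
  define v where "v = w r"
  show ?case
  proof (cases "\<forall>t\<in>T. v t = 0")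
    case True
    obtain x where x: "\<forall>i. i \<notin> T \<longrightarrow> x i = 0" "\<exists>i\<in>T. x i \<noteq> 0" "\<forall>l<r. dotp n x (w l) = 0"
      using Suc.IH[of T w] Suc.prems by auto
    have "dotp n x v = 0" unfolding dotp_def
      using x(1) True by (intro sum.neutral ballI) (metis mult_eq_0_iff)
    then show ?thesis using x unfolding v_def by (metis less_Suc_eq)
  next
    case False
    then obtain t0 where t0: "t0 \<in> T" "v t0 \<noteq> 0" by auto
    have t0n: "t0 < n" using t0 Suc.prems by auto
    define T' where "T' = T - {t0}"
    define w' where "w' l i = w l i - (w l t0 / v t0) * v i" for l i
    have "card T' = card T - 1" unfolding T'_def using t0 Suc.prems by simp
    then have "r < card T'" using Suc.prems by simp
    moreover have "finite T'" "T' \<subseteq> {0..<n}" using Suc.prems unfolding T'_def by auto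
    ultimately obtain y where y: "\<forall>i. i \<notin> T' \<longrightarrow> y i = 0" "\<exists>i\<in>T'. y i \<noteq> 0" "\<forall>l<r. dotp n y (w' l) = 0"
      using Suc.IH[of T' w'] by auto
    define x where "x i = y i - (if i = t0 then dotp n y v / v t0 else 0)" for i
    have dx: "dotp n x z = dotp n y z - dotp n y v / v t0 * z t0" for z
      unfolding x_def[abs_def] dotp_diff_left dotp_delta[OF t0n] ..
    have "\<forall>i. i \<notin> T \<longrightarrow> x i = 0" using y(1) t0 unfolding x_def T'_def by auto
    moreover have "\<exists>i\<in>T. x i \<noteq> 0" using y(2) unfolding x_def T'_def by auto
    moreover have "\<forall>l<Suc r. dotp n x (w l) = 0"
    proof (intro allI impI)
      fix l assume "l < Suc r"
      show "dotp n x (w l) = 0"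
      proof (cases "l = r")
        case True then show ?thesis using dx[of v] t0 unfolding v_def by simp
      next
        case False
        then have "l < r" using \<open>l < Suc r\<close> by simp
        have "dotp n y (w' l) = dotp n y (w l) - (w l t0 / v t0) * dotp n y v"
          unfolding w'_def[abs_def] dotp_diff_right dotp_scale_right ..
        then show ?thesis using y(3) \<open>l < r\<close> dx[of "w l"] by (simp add: field_simps)
      qed
    qed
    ultimately show ?thesis by blast
  qed
qed

lemma sort_map_key: "sort (map f xs) = map f (sort_key f (xs :: nat list))" for f :: "nat \<Rightarrow> nat"
  by (rule properties_for_sort) (simp_all add: sorted_sort_key mset_map)

lemma mulv_cong: "(\<And>j. j < n \<Longrightarrow> x j = x' j) \<Longrightarrow> mulv n a x i = mulv n a x' i"
  unfolding mulv_def by (intro sum.cong) auto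

theorem theorem1:
  fixes n :: nat and E :: "(nat \<times> nat) list" and ls :: "real list"
  assumes "n \<ge> 1"
    and "quiver n E"
    and "sorted_eigenvalues (kirchhoff n E) ls"
  shows "\<forall>k \<in> {1..n}.
     ls ! (k - 1) \<le> real (sorted_degrees n E ! (k - 1))
        + (if k = 1 then 0 else real (sorted_degrees n E ! (k - 2)))"
proof
  fix k assume k: "k \<in> {1..n}"
  define K where "K = kirchhoff n E"
  define sd where "sd = sorted_degrees n E"
  define c where "c = real (sd ! (k - 1)) + (if k = 1 then 0 else real (sd ! (k - 2)))"
  have Kc: "K \<in> carrier_mat n n" unfolding K_def by (rule kirch_carrier)
  have symK: "\<forall>i<n. \<forall>j<n. K $$ (i,j) = K $$ (j,i)"
    unfolding K_def by (auto simp: kirch_entry cnt_def disj_commute)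
  from assms(3) have sl: "sorted ls" and len: "length ls = n" and cp: "char_poly K = (\<Prod>l\<leftarrow>ls. [:- l, 1:])"
    unfolding sorted_eigenvalues_def K_def using Kc K_def by auto
  obtain q where orth: "orthn n n q"
    and eig: "\<forall>l<n. \<forall>i<n. mulv n (\<lambda>i j. K $$ (i,j)) (q l) i = ls ! l * q l i"
    and cmp: "\<forall>x. \<forall>i<n. x i = (\<Sum>l=0..<n. dotp n x (q l) * q l i)"
    using spectral_mat[OF Kc symK cp] by blast
  define sig where "sig = sort_key (qdegree E) [0..<n]"
  have sd_sig: "sd = map (qdegree E) sig" unfolding sd_def sorted_degrees_def sig_def by (rule sort_map_key)
  have dsig: "distinct sig" and ssig: "set sig = {0..<n}" and lsig: "length sig = n"
    unfolding sig_def by (auto simp: distinct_sort set_sort length_sort)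
  have ssd: "sorted sd" unfolding sd_def sorted_degrees_def by simp
  have lsd: "length sd = n" using sd_sig lsig by simp
  define T where "T = set (take k sig)"
  have kn: "k \<le> n" "1 \<le> k" using k by auto
  have cardT: "card T = k"
  proof -
    have "distinct (take k sig)" using dsig by (rule distinct_take)
    then have "card T = length (take k sig)" unfolding T_def by (rule distinct_card)
    then show ?thesis using lsig kn by simp
  qed
  have Tsub: "T \<subseteq> {0..<n}" unfolding T_def using set_take_subset[of k sig] ssig by simp
  have Tdeg: "\<exists>i<k. v = sig ! i \<and> qdegree E v = sd ! i" if "v \<in> T" for v
  proof -
    from that obtain i where "i < length (take k sig)" "v = take k sig ! i"
      unfolding T_def by (auto simp: in_set_conv_nth)
    then show ?thesis using lsig kn sd_sig by (intro exI[of _ i]) auto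
  qed
  have d1: "\<forall>v\<in>T. real (qdegree E v) \<le> c"
  proof
    fix v assume "v \<in> T"
    then obtain i where i: "i < k" "qdegree E v = sd ! i" using Tdeg by blast
    have "sd ! i \<le> sd ! (k - 1)" using ssd i kn lsd by (intro sorted_nth_mono) auto
    then show "real (qdegree E v) \<le> c" using i unfolding c_def by auto
  qed
  have d2: "\<forall>v\<in>T. \<forall>w\<in>T. v \<noteq> w \<longrightarrow> real (qdegree E v) + real (qdegree E w) \<le> c"
  proof (intro ballI impI)
    fix v w assume v: "v \<in> T" and w: "w \<in> T" and vw: "v \<noteq> w"
    obtain i where i: "i < k" "v = sig ! i" "qdegree E v = sd ! i" using Tdeg[OF v] by blast
    obtain j where j: "j < k" "w = sig ! j" "qdegree E w = sd ! j" using Tdeg[OF w] by blast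
    have ij: "i \<noteq> j" using i j vw by auto
    have mono: "sd ! a \<le> sd ! b" if "a \<le> b" "b < n" for a b using ssd that lsd by (intro sorted_nth_mono) auto
    show "real (qdegree E v) + real (qdegree E w) \<le> c"
    proof (cases "i < j")
      case True
      then have "sd ! i \<le> sd ! (k - 2)" "sd ! j \<le> sd ! (k - 1)" "k \<noteq> 1" using j kn mono by auto
      then show ?thesis using i j unfolding c_def by simp
    next
      case False
      then have "j < i" using ij by simp
      then have "sd ! j \<le> sd ! (k - 2)" "sd ! i \<le> sd ! (k - 1)" "k \<noteq> 1" using i kn mono by auto
      then show ?thesis using i j unfolding c_def by simp
    qed
  qed
  have c0: "c \<ge> 0" unfolding c_def by simp
  \<comment> \<open>a vector supported on T orthogonal to the first k-1 eigenvectors\<close>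
  obtain x where xT: "\<forall>i. i \<notin> T \<longrightarrow> x i = 0" and xnz: "\<exists>i\<in>T. x i \<noteq> 0"
    and xo: "\<forall>l<k - 1. dotp n x (q l) = 0"
    using elim_lemma[of T n "k - 1" q] cardT Tsub kn unfolding T_def by auto
  define cc where "cc l = dotp n x (q l)" for l
  have xexp: "x i = (\<Sum>l=0..<n. cc l * q l i)" if "i < n" for i using cmp that unfolding cc_def by auto
  have Ax: "mulv n (\<lambda>i j. K $$ (i,j)) x i = (\<Sum>l=0..<n. (cc l * ls ! l) * q l i)" if "i < n" for i
  proof -
    have "mulv n (\<lambda>i j. K $$ (i,j)) x i = mulv n (\<lambda>i j. K $$ (i,j)) (\<lambda>i. \<Sum>l=0..<n. cc l * q l i) i"
      using xexp by (intro mulv_cong) auto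
    also have "\<dots> = (\<Sum>l=0..<n. cc l * mulv n (\<lambda>i j. K $$ (i,j)) (q l) i)" by (rule mulv_sum) simp
    also have "\<dots> = (\<Sum>l=0..<n. (cc l * ls ! l) * q l i)" using eig that by (intro sum.cong refl) auto
    finally show ?thesis .
  qed
  have xAx: "dotp n x (mulv n (\<lambda>i j. K $$ (i,j)) x) = (\<Sum>l=0..<n. ls ! l * (cc l)^2)"
  proof -
    have "dotp n x (mulv n (\<lambda>i j. K $$ (i,j)) x) = dotp n x (\<lambda>i. \<Sum>l=0..<n. (cc l * ls ! l) * q l i)"
      using Ax by (intro dotp_cong) auto
    also have "\<dots> = (\<Sum>l=0..<n. (cc l * ls ! l) * dotp n x (q l))" by (rule dotp_sum_right) simp
    finally show ?thesis unfolding cc_def by (simp add: power2_eq_square mult_ac)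
  qed
  have xx: "dotp n x x = (\<Sum>l=0..<n. (cc l)^2)"
  proof -
    have "dotp n x x = dotp n x (\<lambda>i. \<Sum>l=0..<n. cc l * q l i)"
      using xexp by (intro dotp_cong) auto
    also have "\<dots> = (\<Sum>l=0..<n. cc l * dotp n x (q l))" by (rule dotp_sum_right) simp
    finally show ?thesis unfolding cc_def by (simp add: power2_eq_square)
  qed
  have lower: "ls ! (k - 1) * dotp n x x \<le> dotp n x (mulv n (\<lambda>i j. K $$ (i,j)) x)"
    unfolding xAx xx sum_distrib_left
  proof (rule sum_mono)
    fix l assume l: "l \<in> {0..<n}"
    show "ls ! (k - 1) * (cc l)^2 \<le> ls ! l * (cc l)^2"
    proof (cases "l < k - 1")
      case True then show ?thesis using xo unfolding cc_def by simp
    next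
      case False
      then have "ls ! (k - 1) \<le> ls ! l" using sl len l by (intro sorted_nth_mono) auto
      then show ?thesis by (intro mult_right_mono) auto
    qed
  qed
  have upper: "dotp n x (mulv n (\<lambda>i j. K $$ (i,j)) x) \<le> c * dotp n x x"
  proof -
    have "dotp n x (mulv n (\<lambda>i j. K $$ (i,j)) x) = (\<Sum>e\<leftarrow>E. ge x e)"
      unfolding K_def by (rule quad_form[OF assms(2)])
    also have "\<dots> \<le> c * (\<Sum>i=0..<n. (x i)^2)"
      by (rule graph_bound[OF assms(2) xT c0 d1 d2])
    finally show ?thesis unfolding dotp_def by (simp add: power2_eq_square)
  qed
  have pos: "dotp n x x > 0"
  proof -
    obtain i where i: "i \<in> T" "x i \<noteq> 0" using xnz by blast
    have "i < n" using i Tsub by auto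
    then have "dotp n x x \<noteq> 0" using dotp_self_zero i by blast
    then show ?thesis using dotp_self_nonneg[of n x] by linarith
  qed
  have "ls ! (k - 1) * dotp n x x \<le> c * dotp n x x" using lower upper by linarith
  then have "ls ! (k - 1) \<le> c" using pos by simp
  then show "ls ! (k - 1) \<le> real (sorted_degrees n E ! (k - 1))
        + (if k = 1 then 0 else real (sorted_degrees n E ! (k - 2)))"
    unfolding c_def sd_def .
qed


end
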